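(* Let $\Lambda(f)$ be the envelope class defined by a function $f$ that is ultimately monotonically non-increasing, and suppose the envelope is Fréchet with index $\gamma>0$, i.e. the smoothed envelope distribution $F$ belongs to $\mathrm{MDA}(\gamma)$. Let $m_n$ be the solution $x$ of $\overline F(x)=x/n$. Then there is a constant $\kappa_\gamma>0$ such that for all sufficiently large $n$, $$R^+(\Lambda_n)\ge \kappa_\gamma\, m_n .$$
   Context: Envelope classes: for $f:\mathbb N_+\to(0,1]$ with $1<\sum_j f(j)<\infty$, $\Lambda(f)$ is the set of stationary memoryless (i.i.d.) sources on $\mathbb N_+$ with marginal $\mathbb P_1\{j\}\le f(j)$ for all $j$; $\Lambda_n$ is the set of their restrictions to $n$ symbols. The envelope distribution is $F(k)=1-\sum_{j>k}f(j)$ when this sum is $<1$, else $0$; a smoothed envelope distribution (still denoted $F$) is a c.d.f. on $\mathbb R_+$ coinciding with $F$ on $\mathbb N$ with continuous derivative, positive wherever $F(\lfloor x\rfloor)\in(0,1)$. $\overline F=1-F$, $U(t)=\overline F^{-1}(1/t)$, and $F\in\mathrm{MDA}(\gamma)$ means there are $A_n>0$ with $F^n(A_nx+U(n))\to\exp(-(1+\gamma x)^{-1/\gamma})$ for all $x$ with $1+\gamma x>0$. The minimax redundancy is $R^+(\Lambda_n)=\inf_{Q_n}\sup_{\mathbb P\in\Lambda}D(\mathbb P_n,Q_n)$, the infimum over probability distributions $Q_n$ on $\mathbb N_+^n$, with $D$ the Kullback–Leibler divergence in bits. *)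

theory Defs
  imports "HOL-Analysis.Analysis"
begin

definition words :: "nat \<Rightarrow> nat list set" where
  "words n = {xs. length xs = n \<and> (\<forall>x\<in>set xs. 1 \<le> x)}"

definition is_envelope :: "(nat \<Rightarrow> real) \<Rightarrow> bool" where
  "is_envelope f \<longleftrightarrow> (\<forall>j\<ge>1. 0 < f j \<and> f j \<le> 1) \<and> summable (\<lambda>i. f (Suc i))
      \<and> 1 < (\<Sum>i. f (Suc i))"

text \<open>Marginals of the memoryless sources in Lambda(f) (values at 0 irrelevant).\<close>
definition envelope_class :: "(nat \<Rightarrow> real) \<Rightarrow> (nat \<Rightarrow> real) set" where
  "envelope_class f = {p. (\<forall>j\<ge>1. 0 \<le> p j \<and> p j \<le> f j) \<and> (\<lambda>i. p (Suc i)) sums 1}"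

definition iid_prob :: "(nat \<Rightarrow> real) \<Rightarrow> nat list \<Rightarrow> real" where
  "iid_prob p xs = prod_list (map p xs)"

definition kl_div :: "'a set \<Rightarrow> ('a \<Rightarrow> real) \<Rightarrow> ('a \<Rightarrow> real) \<Rightarrow> ereal" where
  "kl_div S P Q =
    (if (\<exists>x\<in>S. 0 < P x \<and> Q x \<le> 0) \<or> \<not> ((\<lambda>x. P x * log 2 (P x / Q x)) summable_on S)
     then \<infinity> else ereal (\<Sum>\<^sub>\<infinity>x\<in>S. P x * log 2 (P x / Q x)))"

definition minimax_redundancy :: "(nat \<Rightarrow> real) \<Rightarrow> nat \<Rightarrow> ereal" where
  "minimax_redundancy f n =
    (INF Q \<in> {Q. (\<forall>x\<in>words n. 0 \<le> Q x) \<and> (Q has_sum 1) (words n)}.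
       SUP p \<in> envelope_class f. kl_div (words n) (iid_prob p) Q)"

definition envelope_cdf :: "(nat \<Rightarrow> real) \<Rightarrow> nat \<Rightarrow> real" where
  "envelope_cdf f k = (let s = (\<Sum>i. f (Suc (i + k))) in if s < 1 then 1 - s else 0)"

definition smoothed_envelope_cdf :: "(nat \<Rightarrow> real) \<Rightarrow> (real \<Rightarrow> real) \<Rightarrow> bool" where
  "smoothed_envelope_cdf f Fs \<longleftrightarrow>
     (\<forall>x<0. Fs x = 0) \<and> mono Fs \<and> (Fs \<longlongrightarrow> 1) at_top \<and>
     (\<forall>k::nat. Fs (real k) = envelope_cdf f k) \<and>
     (\<exists>F'. continuous_on {0..} F' \<and>
        (\<forall>x\<ge>0. (Fs has_real_derivative F' x) (at x within {0..}) \<and>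
           (0 < envelope_cdf f (nat \<lfloor>x\<rfloor>) \<and> envelope_cdf f (nat \<lfloor>x\<rfloor>) < 1 \<longrightarrow> 0 < F' x)))"

definition tail_quantile :: "(real \<Rightarrow> real) \<Rightarrow> real \<Rightarrow> real" where
  "tail_quantile Fs t = (THE x. 1 - Fs x = 1 / t)"

definition gev :: "real \<Rightarrow> real \<Rightarrow> real" where
  "gev \<gamma> x = (if \<gamma> = 0 then exp (- exp (- x)) else exp (- ((1 + \<gamma> * x) powr (- 1 / \<gamma>))))"

definition in_MDA :: "(real \<Rightarrow> real) \<Rightarrow> real \<Rightarrow> bool" where
  "in_MDA Fs \<gamma> \<longleftrightarrow> (\<exists>A :: nat \<Rightarrow> real. (\<forall>n. 0 < A n) \<and>
     (\<forall>x. 0 < 1 + \<gamma> * x \<longrightarrow>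
        (\<lambda>n. Fs (A n * x + tail_quantile Fs (real n)) ^ n) \<longlonglongrightarrow> gev \<gamma> x))"

definition m_seq :: "(real \<Rightarrow> real) \<Rightarrow> nat \<Rightarrow> real" where
  "m_seq Fs n = (THE x. 1 - Fs x = x / real n)"

end

theory Submission
  imports Defs
begin


lemma has_sum_prod_pair:
  fixes g :: "'a \<Rightarrow> real" and h :: "'b \<Rightarrow> real"
  assumes g: "(g has_sum a) A" and h: "(h has_sum b) B"
    and g0: "\<And>x. x \<in> A \<Longrightarrow> 0 \<le> g x" and h0: "\<And>y. y \<in> B \<Longrightarrow> 0 \<le> h y"
  shows "((\<lambda>(x,y). g x * h y) has_sum (a * b)) (A \<times> B)"
proof (rule has_sum_SigmaI)
  show "\<And>x. x \<in> A \<Longrightarrow> ((\<lambda>y. (\<lambda>(x,y). g x * h y) (x, y)) has_sum g x * b) B"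
    using h by (auto intro: has_sum_cmult_right)
  show "((\<lambda>x. g x * b) has_sum a * b) A"
    using g by (rule has_sum_cmult_left)
  show "(\<lambda>(x,y). g x * h y) summable_on A \<times> B"
  proof (rule nonneg_bdd_above_summable_on)
    show "\<And>x. x \<in> A \<times> B \<Longrightarrow> 0 \<le> (case x of (x, y) \<Rightarrow> g x * h y)"
      using g0 h0 by auto
    show "bdd_above (sum (\<lambda>(x,y). g x * h y) ` {F. F \<subseteq> A \<times> B \<and> finite F})"
    proof (rule bdd_aboveI2)
      fix F assume F: "F \<in> {F. F \<subseteq> A \<times> B \<and> finite F}"
      have "sum (\<lambda>(x,y). g x * h y) F \<le> sum (\<lambda>(x,y). g x * h y) (fst ` F \<times> snd ` F)"
        using F g0 h0 by (intro sum_mono2) (force intro!: finite_cartesian_product mult_nonneg_nonneg)+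
      also have "\<dots> = sum g (fst ` F) * sum h (snd ` F)"
        by (simp add: sum_product sum.cartesian_product)
      also have "\<dots> \<le> a * b"
        using F g0 h0 g h has_sum_nonneg[OF g g0]
        by (intro mult_mono finite_sum_le_has_sum sum_nonneg has_sum_nonneg[OF h h0]) auto
      finally show "sum (\<lambda>(x,y). g x * h y) F \<le> a * b" .
    qed
  qed
qed

lemma words_0: "words 0 = {[]}"
  by (auto simp: words_def)

lemma words_Suc: "words (Suc n) = (\<lambda>(j,xs). j # xs) ` ({1..} \<times> words n)"
proof -
  have "xs \<in> (\<lambda>(j,xs). j # xs) ` ({1..} \<times> words n)" if "xs \<in> words (Suc n)" for xs
    using that by (cases xs) (auto simp: words_def)
  thus ?thesis by (auto simp: words_def)
qed

lemma iid_has_sum: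
  fixes p :: "nat \<Rightarrow> real"
  assumes p0: "\<And>j. 1 \<le> j \<Longrightarrow> 0 \<le> p j" and ps: "(\<lambda>i. p (Suc i)) sums s"
  shows "((\<lambda>xs. prod_list (map p xs)) has_sum s ^ n) (words n)"
proof (induction n)
  case 0
  then show ?case using has_sum_finite[of "{[]}" "\<lambda>xs. prod_list (map p xs)"] by (simp add: words_0)
next
  case (Suc n)
  have "((\<lambda>i. p (Suc i)) has_sum s) UNIV"
    using ps p0 by (intro sums_nonneg_imp_has_sum) auto
  hence hp: "(p has_sum s) (Suc ` UNIV)"
    by (subst has_sum_reindex) (auto simp: o_def)
  have "Suc ` UNIV = {1::nat..}"
    by (auto simp: image_iff) (metis Suc_pred' less_eq_Suc_le)
  with hp have hp': "(p has_sum s) {1..}" by simp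
  have "((\<lambda>(j,xs). p j * prod_list (map p xs)) has_sum (s * s ^ n)) ({1..} \<times> words n)"
    using hp' Suc p0 by (intro has_sum_prod_pair) (auto simp: words_def intro!: prod_list_nonneg)
  moreover have "inj_on (\<lambda>(j,xs). j # xs) ({1..} \<times> words n)"
    by (auto simp: inj_on_def)
  ultimately show ?case
    by (simp add: words_Suc has_sum_reindex o_def case_prod_unfold)
qed



lemma has_sum_finite_sum:
  fixes g :: "'i \<Rightarrow> 'a \<Rightarrow> real"
  assumes "finite I" "\<And>i. i \<in> I \<Longrightarrow> (g i has_sum s i) A"
  shows "((\<lambda>x. \<Sum>i\<in>I. g i x) has_sum (\<Sum>i\<in>I. s i)) A"
  using assms
proof (induction I rule: finite_induct)
  case empty
  then show ?case by simp
next
  case (insert i I)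
  then show ?case by (simp add: has_sum_add)
qed

lemma log_term_ge:
  fixes P Q c :: real
  assumes "0 < P" "0 < Q"
  shows "P * c + (P - 2 powr c * Q) / ln 2 \<le> P * log 2 (P / Q)"
proof -
  define y where "y = 2 powr c * Q / P"
  have y0: "0 < y" using assms by (simp add: y_def)
  have "ln y \<le> y - 1" using y0 by (rule ln_le_minus_one)
  have l2: "0 < ln (2::real)" by simp
  have "log 2 (P / Q) = c - log 2 y"
    using assms by (simp add: y_def log_divide log_mult log_powr)
  hence "P * log 2 (P / Q) = P * c - P * log 2 y"
    by (simp add: right_diff_distrib)
  hence "P * log 2 (P / Q) = P * c - P * ln y / ln 2"
    by (simp add: log_def)
  moreover have "P * ln y \<le> P * (y - 1)"
    using \<open>ln y \<le> y - 1\<close> assms by (intro mult_left_mono) auto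
  moreover have "P * (y - 1) = 2 powr c * Q - P"
    using assms by (simp add: y_def field_simps)
  ultimately have "P * ln y / ln 2 \<le> (2 powr c * Q - P) / ln 2"
    using l2 by (intro divide_right_mono) auto
  with \<open>P * log 2 (P / Q) = P * c - P * ln y / ln 2\<close> show ?thesis
    by (simp add: diff_divide_distrib)
qed

lemma kl_avg_bound:
  fixes P :: "'s \<Rightarrow> 'a \<Rightarrow> real" and Q :: "'a \<Rightarrow> real" and c :: "'a \<Rightarrow> nat" and E :: real
  assumes fin: "finite \<Theta>" and ne: "\<Theta> \<noteq> {}"
    and P1: "\<And>S. S \<in> \<Theta> \<Longrightarrow> (P S has_sum 1) W"
    and P0: "\<And>S x. S \<in> \<Theta> \<Longrightarrow> x \<in> W \<Longrightarrow> 0 \<le> P S x"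
    and Q0: "\<And>x. x \<in> W \<Longrightarrow> 0 \<le> Q x" and Q1: "(Q has_sum 1) W"
    and cnt: "\<And>x. x \<in> W \<Longrightarrow> real (card {S\<in>\<Theta>. 0 < P S x}) * 2 ^ c x \<le> real (card \<Theta>)"
    and E: "\<And>S. S \<in> \<Theta> \<Longrightarrow> ((\<lambda>x. P S x * real (c x)) has_sum E) W"
  shows "\<exists>S\<in>\<Theta>. ereal E \<le> kl_div W (P S) Q"
proof (rule ccontr)
  assume H: "\<not> (\<exists>S\<in>\<Theta>. ereal E \<le> kl_div W (P S) Q)"
  define D where "D = (\<lambda>S x. P S x * log 2 (P S x / Q x))"
  define g where "g S x = (if 0 < P S x then 2 ^ c x * Q x else 0)" for S x
  define t where "t S x = P S x * real (c x) + (P S x - g S x) / ln 2" for S x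
  define M where "M = real (card \<Theta>)"
  have M0: "0 < M" using fin ne by (simp add: M_def card_gt_0_iff)
  have Qs: "Q summable_on W" using Q1 by (simp add: has_sum_iff)
  have g_le: "g S x \<le> M * Q x" if "S \<in> \<Theta>" "x \<in> W" for S x
  proof (cases "0 < P S x")
    case True
    have "S \<in> {S\<in>\<Theta>. 0 < P S x}" using True that by auto
    hence "1 \<le> card {S\<in>\<Theta>. 0 < P S x}" using fin
      by (metis (no_types, lifting) One_nat_def Suc_leI card_gt_0_iff empty_iff finite_subset mem_Collect_eq subsetI)
    hence "(1::real) * 2 ^ c x \<le> real (card {S\<in>\<Theta>. 0 < P S x}) * 2 ^ c x"
      by (intro mult_right_mono) auto
    with cnt[OF that(2)] have "(2::real) ^ c x \<le> M" unfolding M_def by linarith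
    then show ?thesis using True Q0[OF that(2)] by (simp add: g_def mult_right_mono)
  next
    case False
    then show ?thesis using M0 Q0[OF that(2)] by (simp add: g_def)
  qed
  have g0: "0 \<le> g S x" if "x \<in> W" for S x using Q0[OF that] by (simp add: g_def)
  have gs: "g S summable_on W" if "S \<in> \<Theta>" for S
    by (rule summable_on_comparison_test[of "\<lambda>x. M * Q x"]) 
       (use Qs g_le g0 that in \<open>auto intro: summable_on_cmult_right\<close>)
  have main: "E + (1 - infsum (g S) W) / ln 2 \<le> infsum (D S) W \<and> infsum (D S) W < E"
    if S: "S \<in> \<Theta>" for S
  proof -
    have kl: "kl_div W (P S) Q < ereal E" using H S by auto
    hence fin1: "\<not> ((\<exists>x\<in>W. 0 < P S x \<and> Q x \<le> 0) \<or> \<not> (D S summable_on W))"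
      by (auto simp: kl_div_def D_def split: if_splits)
    hence kleq: "kl_div W (P S) Q = ereal (infsum (D S) W)"
      by (simp add: kl_div_def D_def)
    have Ds: "D S summable_on W" using fin1 by auto
    have ts: "(t S has_sum (E + (1 - infsum (g S) W) / ln 2)) W"
    proof -
      have "((\<lambda>x. P S x + - g S x) has_sum (1 + - infsum (g S) W)) W"
        by (rule has_sum_add[OF P1[OF S] has_sum_uminusI[OF has_sum_infsum[OF gs[OF S]]]])
      hence hd: "((\<lambda>x. P S x - g S x) has_sum (1 - infsum (g S) W)) W"
        by simp
      hence "((\<lambda>x. (P S x - g S x) / ln 2) has_sum ((1 - infsum (g S) W) / ln 2)) W"
        using has_sum_cmult_left[OF hd, of "1 / ln 2"] by simp
      from has_sum_add[OF E[OF S] this] show ?thesis unfolding t_def by simp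
    qed
    have "infsum (t S) W \<le> infsum (D S) W"
    proof (rule infsum_mono)
      show "t S summable_on W" using ts by (auto simp: has_sum_iff)
      show "D S summable_on W" by (rule Ds)
      fix x assume x: "x \<in> W"
      show "t S x \<le> D S x"
      proof (cases "0 < P S x")
        case True
        hence "0 < Q x" using fin1 x by force
        from log_term_ge[OF True this, of "real (c x)"] show ?thesis
          using True by (simp add: t_def D_def g_def powr_realpow)
      next
        case False
        hence "P S x = 0" using P0[OF S x] by auto
        thus ?thesis by (simp add: t_def D_def g_def)
      qed
    qed
    moreover have "infsum (t S) W = E + (1 - infsum (g S) W) / ln 2"
      using ts by (simp add: has_sum_iff)
    ultimately show ?thesis using kl kleq by simp
  qed
  have sumg: "(\<Sum>S\<in>\<Theta>. infsum (g S) W) \<le> M"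
  proof -
    have h1: "((\<lambda>x. \<Sum>S\<in>\<Theta>. g S x) has_sum (\<Sum>S\<in>\<Theta>. infsum (g S) W)) W"
      using fin gs by (intro has_sum_finite_sum) (auto simp: has_sum_iff)
    have h2: "((\<lambda>x. M * Q x) has_sum M * 1) W"
      using Q1 by (rule has_sum_cmult_right)
    have le: "(\<Sum>S\<in>\<Theta>. g S x) \<le> M * Q x" if x: "x \<in> W" for x
    proof -
      have "(\<Sum>S\<in>\<Theta>. g S x) = (\<Sum>S\<in>{S\<in>\<Theta>. 0 < P S x}. 2 ^ c x * Q x)"
        unfolding g_def using fin by (simp add: sum.inter_filter[symmetric])
      also have "\<dots> = real (card {S\<in>\<Theta>. 0 < P S x}) * 2 ^ c x * Q x" by simp
      also have "\<dots> \<le> M * Q x"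
        using cnt[OF x] Q0[OF x] by (simp add: M_def mult_right_mono)
      finally show ?thesis .
    qed
    from has_sum_mono[OF h1 h2 le] show ?thesis by simp
  qed
  have "(\<Sum>S\<in>\<Theta>. E + (1 - infsum (g S) W) / ln 2) \<le> (\<Sum>S\<in>\<Theta>. infsum (D S) W)"
    using main by (intro sum_mono) auto
  also have "\<dots> < (\<Sum>S\<in>\<Theta>. E)"
    using main fin ne by (intro sum_strict_mono) auto
  finally have "(\<Sum>S\<in>\<Theta>. E + (1 - infsum (g S) W) / ln 2) < M * E"
    by (simp add: M_def)
  moreover have "(\<Sum>S\<in>\<Theta>. E + (1 - infsum (g S) W) / ln 2) = M * E + (M - (\<Sum>S\<in>\<Theta>. infsum (g S) W)) / ln 2"
    by (simp add: sum.distrib M_def sum_divide_distrib[symmetric] sum_subtractf)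
  moreover have "0 \<le> (M - (\<Sum>S\<in>\<Theta>. infsum (g S) W)) / ln 2"
    using sumg by simp
  ultimately show False by simp
qed



lemma pair_sum:
  fixes h :: "nat \<Rightarrow> real"
  shows "(\<Sum>i\<in>{a..<a+2*N}. h i) = (\<Sum>b<N. h (a+2*b) + h (a+2*b+1))"
proof (induction N)
  case 0 then show ?case by simp
next
  case (Suc N)
  have e: "a + 2 * Suc N = Suc (Suc (a + 2*N))" by simp
  show ?case unfolding e using Suc by (simp add: add.assoc)
qed

lemma prod_list_zero_out:
  fixes p :: "nat \<Rightarrow> real"
  shows "prod_list (map (\<lambda>j. if B j then 0 else p j) xs) = (if \<exists>j\<in>set xs. B j then 0 else prod_list (map p xs))"
  by (induction xs) auto

lemma prod_list_pos_imp:
  fixes p :: "nat \<Rightarrow> real"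
  assumes "0 < prod_list (map p xs)"
  shows "\<forall>j\<in>set xs. p j \<noteq> 0"
proof
  fix j assume "j \<in> set xs"
  hence "p j \<in> set (map p xs)" by simp
  show "p j \<noteq> 0"
  proof
    assume "p j = 0"
    hence "0 \<in> set (map p xs)" using \<open>p j \<in> set (map p xs)\<close> by simp
    hence "prod_list (map p xs) = 0" by (simp add: prod_list_zero_iff)
    with assms show False by simp
  qed
qed

lemma card_fix_part:
  assumes "H \<subseteq> U" "finite U"
  shows "card {S. S \<subseteq> U \<and> S \<inter> H = R} \<le> 2 ^ (card U - card H)"
proof -
  have "{S. S \<subseteq> U \<and> S \<inter> H = R} \<subseteq> (\<lambda>T. T \<union> R) ` Pow (U - H)"
  proof
    fix S assume "S \<in> {S. S \<subseteq> U \<and> S \<inter> H = R}"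
    hence "S = (S - H) \<union> R" "S - H \<in> Pow (U - H)" by auto
    thus "S \<in> (\<lambda>T. T \<union> R) ` Pow (U - H)" by blast
  qed
  hence "card {S. S \<subseteq> U \<and> S \<inter> H = R} \<le> card ((\<lambda>T. T \<union> R) ` Pow (U - H))"
    using assms by (intro card_mono) auto
  also have "\<dots> \<le> card (Pow (U - H))" using assms by (intro card_image_le) auto
  also have "\<dots> = 2 ^ (card U - card H)"
    using assms by (simp add: card_Pow card_Diff_subset finite_subset)
  finally show ?thesis .
qed

lemma card_filter_sum:
  "real (card {b\<in>A. P b}) = (\<Sum>b\<in>A. if P b then 1 else 0)" if "finite A"
  using that by (simp add: sum.inter_filter[symmetric])



definition fillf :: "(nat \<Rightarrow> real) \<Rightarrow> nat \<Rightarrow> real \<Rightarrow> nat \<Rightarrow> real" where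
  "fillf f J0 lam j = (if 1 \<le> j \<and> j \<le> J0 then lam * f j else 0)"

definition blkX :: "nat \<Rightarrow> nat \<Rightarrow> real \<Rightarrow> nat set \<Rightarrow> nat set \<Rightarrow> nat \<Rightarrow> real" where
  "blkX J N q S X j = (if J \<le> j \<and> j < J + 2*N \<and> (j - J) div 2 \<notin> X \<and> ((j - J) mod 2 = 1 \<longleftrightarrow> (j - J) div 2 \<in> S) then q else 0)"

lemma blkX_sum:
  assumes "1 \<le> J" "X \<subseteq> {..<N}"
  shows "(\<lambda>i. blkX J N q S X (Suc i)) sums (q * real (card ({..<N} - X)))"
proof -
  let ?a = "J - 1"
  have "(\<lambda>i. blkX J N q S X (Suc i)) sums (\<Sum>i\<in>{?a..<?a+2*N}. blkX J N q S X (Suc i))"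
    by (rule sums_finite) (use assms in \<open>auto simp: blkX_def\<close>)
  also have "(\<Sum>i\<in>{?a..<?a+2*N}. blkX J N q S X (Suc i))
      = (\<Sum>b<N. blkX J N q S X (Suc (?a+2*b)) + blkX J N q S X (Suc (?a+2*b+1)))"
    by (rule pair_sum)
  also have "\<dots> = (\<Sum>b<N. if b \<in> X then 0 else q)"
  proof (rule sum.cong)
    fix b assume b: "b \<in> {..<N}"
    have e1: "Suc (?a+2*b) = J + 2*b" "Suc (?a+2*b+1) = J+2*b+1" using assms by auto
    have d1: "(J + 2*b - J) div 2 = b" "(J + 2*b - J) mod 2 = 0" by auto
    have d2: "(J + 2*b + 1 - J) div 2 = b" "(J + 2*b + 1 - J) mod 2 = 1" by auto
    show "blkX J N q S X (Suc (?a+2*b)) + blkX J N q S X (Suc (?a+2*b+1)) = (if b \<in> X then 0 else q)"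
      unfolding e1 blkX_def d1 d2 using b by auto
  qed simp
  also have "\<dots> = q * real (card ({..<N} - X))"
    using assms by (simp add: sum.If_cases Int_absorb2 Diff_eq[symmetric] Compl_eq_Diff_UNIV) (metis Diff_eq Compl_eq_Diff_UNIV)
  finally show ?thesis .
qed

lemma div2_cases:
  fixes j J b :: nat
  assumes "J \<le> j" "(j - J) div 2 = b"
  shows "j = J + 2*b \<or> j = J + 2*b + 1"
proof -
  have "j - J = 2 * ((j - J) div 2) + (j - J) mod 2" by simp
  moreover have "(j - J) mod 2 = 0 \<or> (j - J) mod 2 = 1" by auto
  ultimately show ?thesis using assms by auto
qed

lemma construction:
  fixes f :: "nat \<Rightarrow> real" and Q :: "nat list \<Rightarrow> real"
  assumes fpos: "\<And>j. 1 \<le> j \<Longrightarrow> 0 < f j \<and> f j \<le> 1"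
    and S0: "1 \<le> (\<Sum>i<J0. f (Suc i))"
    and J: "J0 < J"
    and q: "0 < q" "real N * q \<le> 1"
    and fq: "\<And>j. J \<le> j \<Longrightarrow> j < J + 2*N \<Longrightarrow> q \<le> f j"
    and Q0: "\<forall>x\<in>words n. 0 \<le> Q x" and Q1: "(Q has_sum 1) (words n)"
  shows "\<exists>p\<in>envelope_class f. ereal (real N * (1 - (1-q)^n)) \<le> kl_div (words n) (iid_prob p) Q"
proof -
  define S0 where "S0 = (\<Sum>i<J0. f (Suc i))"
  define lam where "lam = (1 - real N * q) / S0"
  define src where "src X S j = fillf f J0 lam j + blkX J N q S X j" for X S j
  define P where "P S = iid_prob (src {} S)" for S
  define hit where "hit b x = (\<exists>j\<in>set x. j = J+2*b \<or> j = J+2*b+1)" for b x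
  define c where "c x = card {b\<in>{..<N}. hit b x}" for x
  have J1: "1 \<le> J" using J by simp
  have S0pos: "1 \<le> S0" using S0 by (simp add: S0_def)
  have qN0: "0 \<le> real N * q" using q by simp
  have l1: "(1 - real N * q) / S0 \<le> S0 / S0"
    using qN0 S0pos by (intro divide_right_mono) auto
  have lam01: "0 \<le> lam" "lam \<le> 1" using q S0pos l1 by (auto simp: lam_def)
  have fill_sums: "(\<lambda>i. fillf f J0 lam (Suc i)) sums (1 - real N * q)"
  proof -
    have "(\<lambda>i. fillf f J0 lam (Suc i)) sums (\<Sum>i<J0. fillf f J0 lam (Suc i))"
      by (rule sums_finite) (auto simp: fillf_def)
    also have "(\<Sum>i<J0. fillf f J0 lam (Suc i)) = lam * S0"
      by (simp add: fillf_def S0_def sum_distrib_left)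
    also have "\<dots> = 1 - real N * q" using S0pos by (simp add: lam_def)
    finally show ?thesis .
  qed
  have src_sums: "(\<lambda>i. src X S (Suc i)) sums (1 - real N * q + q * real (card ({..<N} - X)))"
    if "X \<subseteq> {..<N}" for X S
    unfolding src_def by (rule sums_add[OF fill_sums blkX_sum[OF J1 that]])
  have src_nonneg: "0 \<le> src X S j" for X S j
  proof -
    have "0 \<le> fillf f J0 lam j"
      using lam01 fpos[of j] by (auto simp: fillf_def)
    moreover have "0 \<le> blkX J N q S X j" using q by (simp add: blkX_def)
    ultimately show ?thesis by (simp add: src_def)
  qed
  have src_env: "src {} S \<in> envelope_class f" for S
  proof -
    have "src {} S j \<le> f j" if j: "1 \<le> j" for j
    proof (cases "j \<le> J0")
      case True
      hence "blkX J N q S {} j = 0" using J by (simp add: blkX_def)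
      moreover have "lam * f j \<le> 1 * f j" using lam01 fpos[OF j] by (intro mult_right_mono) auto
      ultimately show ?thesis using True j by (simp add: src_def fillf_def)
    next
      case False
      hence "fillf f J0 lam j = 0" by (simp add: fillf_def)
      moreover have "blkX J N q S {} j \<le> f j"
        using fq[of j] fpos[OF j] by (auto simp: blkX_def)
      ultimately show ?thesis by (simp add: src_def)
    qed
    moreover have "(\<lambda>i. src {} S (Suc i)) sums 1"
      using src_sums[of "{}" S] by simp
    ultimately show ?thesis using src_nonneg by (simp add: envelope_class_def)
  qed
  have P_sum: "(P S has_sum 1) (words n)" for S
    using iid_has_sum[of "src {} S" 1 n] src_nonneg src_sums[of "{}" S]
    by (simp add: P_def iid_prob_def[abs_def])
  have P0: "0 \<le> P S x" for S x
    unfolding P_def iid_prob_def using src_nonneg by (intro prod_list_nonneg) auto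
  have src_b: "src {b} S j = (if j = J+2*b \<or> j = J+2*b+1 then 0 else src {} S j)" if b: "b < N" for b S j
  proof (cases "j = J+2*b \<or> j = J+2*b+1")
    case True
    hence "(j - J) div 2 = b" "\<not> j \<le> J0" using J by auto
    thus ?thesis using True by (simp add: src_def fillf_def blkX_def)
  next
    case False
    hence "J \<le> j \<Longrightarrow> (j - J) div 2 \<noteq> b" using div2_cases by blast
    thus ?thesis using False by (simp add: src_def fillf_def blkX_def)
  qed
  have avoid: "((\<lambda>x. if hit b x then 0 else P S x) has_sum (1-q)^n) (words n)" if b: "b < N" for b S
  proof -
    have "card ({..<N} - {b}) = N - 1" using b by simp
    hence "(\<lambda>i. src {b} S (Suc i)) sums (1 - q)"
      using src_sums[of "{b}" S] b by (simp add: of_nat_diff algebra_simps)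
    from iid_has_sum[OF _ this, of n] src_nonneg
    have "((\<lambda>xs. prod_list (map (src {b} S) xs)) has_sum (1-q)^n) (words n)" by simp
    moreover have "prod_list (map (src {b} S) xs) = (if hit b xs then 0 else P S xs)" for xs
      unfolding src_b[OF b, abs_def] prod_list_zero_out hit_def P_def iid_prob_def by simp
    ultimately show ?thesis by simp
  qed
  have Eh: "((\<lambda>x. P S x * real (c x)) has_sum (real N * (1 - (1-q)^n))) (words n)" for S
  proof -
    have "((\<lambda>x. \<Sum>b<N. P S x - (if hit b x then 0 else P S x)) has_sum (\<Sum>b<N. 1 - (1-q)^n)) (words n)"
    proof (rule has_sum_finite_sum)
      fix b assume "b \<in> {..<N}"
      hence "((\<lambda>x. P S x + - (if hit b x then 0 else P S x)) has_sum (1 + (- ((1-q)^n)))) (words n)"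
        by (intro has_sum_add[OF P_sum has_sum_uminusI[OF avoid]]) auto
      thus "((\<lambda>x. P S x - (if hit b x then 0 else P S x)) has_sum (1 - (1-q)^n)) (words n)"
        by simp
    qed simp
    moreover have "(\<Sum>b<N. P S x - (if hit b x then 0 else P S x)) = P S x * real (c x)" for x
    proof -
      have "(\<Sum>b<N. P S x - (if hit b x then 0 else P S x)) = (\<Sum>b<N. P S x * (if hit b x then 1 else 0))"
        by (intro sum.cong) auto
      also have "\<dots> = P S x * real (c x)"
        unfolding c_def card_filter_sum[OF finite_lessThan] by (simp add: sum_distrib_left)
      finally show ?thesis .
    qed
    ultimately show ?thesis by simp
  qed
  have cnt: "real (card {S\<in>Pow {..<N}. 0 < P S x}) * 2 ^ c x \<le> real (card (Pow {..<N::nat}))"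
    if x: "x \<in> words n" for x
  proof -
    define H where "H = {b\<in>{..<N}. hit b x}"
    define R where "R = {b\<in>H. J+2*b+1 \<in> set x}"
    have sub: "{S\<in>Pow {..<N}. 0 < P S x} \<subseteq> {S. S \<subseteq> {..<N} \<and> S \<inter> H = R}"
    proof
      fix S assume "S \<in> {S\<in>Pow {..<N}. 0 < P S x}"
      hence S: "S \<subseteq> {..<N}" and pos: "0 < P S x" by auto
      have nz: "\<forall>j\<in>set x. src {} S j \<noteq> 0"
        using prod_list_pos_imp[of "src {} S" x] pos by (simp add: P_def iid_prob_def)
      have "b \<in> S \<longleftrightarrow> b \<in> R" if bH: "b \<in> H" for b
      proof -
        have bN: "b < N" and hb: "hit b x" using bH by (auto simp: H_def)
        have d1: "(J + 2*b - J) div 2 = b" "(J + 2*b - J) mod 2 = 0" by auto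
        have d2: "(J + 2*b + 1 - J) div 2 = b" "(J + 2*b + 1 - J) mod 2 = 1" by auto
        have v1: "src {} S (J+2*b) = (if b \<in> S then 0 else q)"
          using J bN by (simp add: src_def fillf_def blkX_def d1)
        have v2: "src {} S (J+2*b+1) = (if b \<in> S then q else 0)"
          using J bN by (simp add: src_def fillf_def blkX_def d2)
        show ?thesis
        proof
          assume "b \<in> S"
          hence "J+2*b \<notin> set x" using nz v1 by auto
          hence "J+2*b+1 \<in> set x" using hb by (auto simp: hit_def)
          thus "b \<in> R" using bH by (simp add: R_def)
        next
          assume "b \<in> R"
          hence "J+2*b+1 \<in> set x" by (simp add: R_def)
          hence "src {} S (J+2*b+1) \<noteq> 0" using nz by auto
          thus "b \<in> S" using v2 by (auto split: if_splits)
        qed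
      qed
      hence "S \<inter> H = R" by (auto simp: R_def)
      thus "S \<in> {S. S \<subseteq> {..<N} \<and> S \<inter> H = R}" using S by simp
    qed
    have HN: "H \<subseteq> {..<N}" by (auto simp: H_def)
    have cH: "card H \<le> N" using card_mono[OF _ HN] by simp
    have "card {S\<in>Pow {..<N}. 0 < P S x} \<le> card {S. S \<subseteq> {..<N} \<and> S \<inter> H = R}"
      by (rule card_mono[OF _ sub]) simp
    also have "\<dots> \<le> 2 ^ (N - card H)"
      using card_fix_part[OF HN] by simp
    finally have cr: "real (card {S\<in>Pow {..<N}. 0 < P S x}) \<le> 2 ^ (N - card H)"
      by (metis of_nat_le_iff of_nat_numeral of_nat_power)
    have cx: "c x = card H" by (simp add: c_def H_def)
    have "real (card {S\<in>Pow {..<N}. 0 < P S x}) * 2 ^ c x \<le> 2 ^ (N - card H) * 2 ^ card H"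
      unfolding cx by (rule mult_right_mono[OF cr]) simp
    also have "(2::real) ^ (N - card H) * 2 ^ card H = 2 ^ N"
      using cH by (simp add: power_add[symmetric])
    also have "\<dots> = real (card (Pow {..<N::nat}))" by (simp add: card_Pow)
    finally show ?thesis .
  qed
  have "\<exists>S\<in>Pow {..<N}. ereal (real N * (1 - (1-q)^n)) \<le> kl_div (words n) (P S) Q"
    by (rule kl_avg_bound[where c=c]) (use P_sum P0 Q0 Q1 cnt Eh in auto)
  then obtain S where "ereal (real N * (1 - (1-q)^n)) \<le> kl_div (words n) (iid_prob (src {} S)) Q"
    by (auto simp: P_def)
  thus ?thesis using src_env by blast
qed



lemma mono_le_lim:
  fixes Fs :: "real \<Rightarrow> real"
  assumes "mono Fs" "(Fs \<longlongrightarrow> 1) at_top"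
  shows "Fs x \<le> 1"
proof (rule ccontr)
  assume "\<not> Fs x \<le> 1"
  hence "1 < Fs x" by simp
  from order_tendstoD(2)[OF assms(2) this] have "eventually (\<lambda>y. Fs y < Fs x) at_top" .
  then obtain Y where "\<And>y. y \<ge> Y \<Longrightarrow> Fs y < Fs x" by (auto simp: eventually_at_top_linorder)
  hence "Fs (max x Y) < Fs x" by simp
  moreover have "Fs x \<le> Fs (max x Y)" using assms(1) by (simp add: mono_def)
  ultimately show False by simp
qed

lemma pow_le_exp:
  fixes y :: real
  assumes "0 \<le> 1 - y"
  shows "(1 - y) ^ n \<le> exp (- (real n * y))"
proof -
  have "(1 - y) ^ n \<le> exp (- y) ^ n"
    using assms exp_ge_add_one_self[of "-y"] by (intro power_mono) auto
  also have "\<dots> = exp (- (real n * y))" by (simp add: exp_of_nat_mult[symmetric])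
  finally show ?thesis .
qed

lemma tail_ratio:
  fixes Fs :: "real \<Rightarrow> real" and \<gamma> :: real
  assumes F0: "\<And>x. x < 0 \<Longrightarrow> Fs x = 0" and mono: "mono Fs" and lim: "(Fs \<longlongrightarrow> 1) at_top"
    and pos: "\<And>t. Fs t < 1" and g: "0 < \<gamma>" and mda: "in_MDA Fs \<gamma>"
  shows "\<exists>lam\<ge>1. \<exists>T. \<forall>t\<ge>T. 1 - Fs (lam * t) \<le> (1 - Fs t) / 4"
proof -
  have Fle1: "Fs x \<le> 1" for x using mono_le_lim[OF mono lim] .
  have Fge0: "0 \<le> Fs x" for x
  proof -
    have "Fs (min x (-1)) \<le> Fs x" using mono by (simp add: mono_def)
    moreover have "Fs (min x (-1)) = 0" by (rule F0) simp
    ultimately show ?thesis by simp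
  qed
  obtain A where A: "\<And>n. 0 < A n"
    and conv: "\<And>x. 0 < 1 + \<gamma> * x \<Longrightarrow> (\<lambda>n. Fs (A n * x + tail_quantile Fs (real n)) ^ n) \<longlonglongrightarrow> gev \<gamma> x"
    using mda unfolding in_MDA_def by blast
  define u where "u n = tail_quantile Fs (real n)" for n :: nat
  define Mv where "Mv = (64::real) powr \<gamma>"
  define x1 where "x1 = (Mv - 1) / \<gamma>"
  define lam where "lam = 2 * Mv - 1"
  have Mv1: "1 \<le> Mv" unfolding Mv_def using g by (intro ge_one_powr_ge_zero) auto
  have x10: "0 \<le> x1" using Mv1 g by (simp add: x1_def)
  have lam1: "1 \<le> lam" using Mv1 by (simp add: lam_def)
  have lamx: "lam = 1 + 2 * \<gamma> * x1" using g by (simp add: lam_def x1_def field_simps)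
  have ev1: "eventually (\<lambda>n. A n / (2*\<gamma>) \<le> u n) sequentially"
  proof -
    have "(\<lambda>n. Fs (A n * (-1/(2*\<gamma>)) + u n) ^ n) \<longlonglongrightarrow> gev \<gamma> (-1/(2*\<gamma>))"
      using conv[of "-1/(2*\<gamma>)"] g by (simp add: u_def)
    moreover have "0 < gev \<gamma> (-1/(2*\<gamma>))" by (simp add: gev_def)
    ultimately have "eventually (\<lambda>n. 0 < Fs (A n * (-1/(2*\<gamma>)) + u n) ^ n) sequentially"
      by (rule order_tendstoD(1))
    moreover have "eventually (\<lambda>n. 1 \<le> n) sequentially" by (rule eventually_ge_at_top)
    ultimately show ?thesis
    proof eventually_elim
      case (elim n)
      show ?case
      proof (rule ccontr)
        assume "\<not> A n / (2*\<gamma>) \<le> u n"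
        hence "A n * (-1/(2*\<gamma>)) + u n < 0" using g by (simp add: field_simps)
        hence "Fs (A n * (-1/(2*\<gamma>)) + u n) = 0" by (rule F0)
        with elim show False by (simp add: power_0_left)
      qed
    qed
  qed
  have ev2: "eventually (\<lambda>n. 2/5 < real n * (1 - Fs (u n))) sequentially"
  proof -
    have "(\<lambda>n. Fs (u n) ^ n) \<longlonglongrightarrow> gev \<gamma> 0"
      using conv[of 0] by (simp add: u_def)
    moreover have "gev \<gamma> 0 < 3/5"
    proof -
      have "gev \<gamma> 0 = exp (-1)" using g by (simp add: gev_def)
      moreover have "2 \<le> exp (1::real)" using exp_ge_add_one_self[of 1] by simp
      hence "exp (-1::real) \<le> 1/2" by (simp add: exp_minus field_simps)
      ultimately show ?thesis by simp
    qed
    ultimately have "eventually (\<lambda>n. Fs (u n) ^ n < 3/5) sequentially"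
      by (rule order_tendstoD(2))
    thus ?thesis
    proof eventually_elim
      case (elim n)
      have "1 + real n * (- (1 - Fs (u n))) \<le> (1 + (- (1 - Fs (u n)))) ^ n"
        using Fge0[of "u n"] by (intro Bernoulli_inequality) simp
      moreover have "real n * (- (1 - Fs (u n))) = - (real n * (1 - Fs (u n)))" by (simp add: algebra_simps)
      moreover have "1 + (- (1 - Fs (u n))) = Fs (u n)" by simp
      ultimately have "1 - real n * (1 - Fs (u n)) \<le> Fs (u n) ^ n" by simp
      thus ?case using elim by linarith
    qed
  qed
  have ev3: "eventually (\<lambda>n. real n * (1 - Fs (A n * x1 + u n)) < 1/32) sequentially"
  proof -
    have p1: "0 < 1 + \<gamma> * x1" using Mv1 g by (simp add: x1_def)
    have gv: "gev \<gamma> x1 = exp (- (1/64))"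
    proof -
      have "1 + \<gamma> * x1 = Mv" using g by (simp add: x1_def)
      moreover have "Mv powr (- 1 / \<gamma>) = 1/64"
        using g by (simp add: Mv_def powr_powr powr_minus_divide)
      ultimately show ?thesis using g by (simp add: gev_def)
    qed
    have "(\<lambda>n. Fs (A n * x1 + u n) ^ n) \<longlonglongrightarrow> gev \<gamma> x1"
      using conv[OF p1] by (simp add: u_def)
    moreover have "exp (- (1/32)) < gev \<gamma> x1" unfolding gv by simp
    ultimately have "eventually (\<lambda>n. exp (- (1/32)) < Fs (A n * x1 + u n) ^ n) sequentially"
      by (rule order_tendstoD(1))
    thus ?thesis
    proof eventually_elim
      case (elim n)
      have "Fs (A n * x1 + u n) ^ n = (1 - (1 - Fs (A n * x1 + u n))) ^ n" by simp
      also have "\<dots> \<le> exp (- (real n * (1 - Fs (A n * x1 + u n))))"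
        using Fge0 by (intro pow_le_exp) simp
      finally have "exp (- (1/32)) < exp (- (real n * (1 - Fs (A n * x1 + u n))))"
        using elim by linarith
      thus ?case by simp
    qed
  qed
  from eventually_conj[OF ev1 eventually_conj[OF ev2 ev3]]
  obtain n0 where n0: "\<And>n. n \<ge> n0 \<Longrightarrow> A n / (2*\<gamma>) \<le> u n \<and> 2/5 < real n * (1 - Fs (u n))
      \<and> real n * (1 - Fs (A n * x1 + u n)) < 1/32"
    by (auto simp: eventually_sequentially)
  have "eventually (\<lambda>t. Fs t > 1 - 1 / (4 * (real n0 + 1))) at_top"
    by (rule order_tendstoD(1)[OF lim]) simp
  then obtain T where T0: "\<And>t. t \<ge> T \<Longrightarrow> Fs t > 1 - 1 / (4 * (real n0 + 1))"
    by (auto simp: eventually_at_top_linorder)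
  have T: "1 - Fs t < 1 / (4 * (real n0 + 1))" if "t \<ge> T" for t
    using T0[OF that] by linarith
  have "1 - Fs (lam * t) \<le> (1 - Fs t) / 4" if t: "t \<ge> T" for t
  proof -
    define e where "e = 1 - Fs t"
    have e0: "0 < e" using pos[of t] by (simp add: e_def)
    have eT: "e < 1 / (4 * (real n0 + 1))" using T[OF t] by (simp add: e_def)
    define n where "n = nat \<lfloor>1 / (4 * e)\<rfloor>"
    have r0: "0 < 1 / (4 * e)" using e0 by simp
    have fl: "of_int \<lfloor>1 / (4 * e)\<rfloor> \<le> 1 / (4 * e)" "1 / (4 * e) < of_int \<lfloor>1 / (4 * e)\<rfloor> + 1"
      by linarith+
    have fl0: "0 \<le> \<lfloor>1 / (4 * e)\<rfloor>" using r0 by simp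
    have rn: "real n = of_int \<lfloor>1 / (4 * e)\<rfloor>" unfolding n_def using fl0 by simp
    have "real n0 + 1 < 1 / (4 * e)" using eT e0 by (simp add: field_simps)
    hence "of_int (int n0 + 1) \<le> 1 / (4 * e)" by simp
    hence "int n0 + 1 \<le> \<lfloor>1 / (4 * e)\<rfloor>" by (simp only: le_floor_iff)
    hence "real_of_int (int n0 + 1) \<le> real_of_int \<lfloor>1 / (4 * e)\<rfloor>" by (simp only: of_int_le_iff)
    hence nge: "real n0 + 1 \<le> real n" using rn by simp
    hence nn0: "n \<ge> n0" by simp
    have npos: "0 < real n" using nge by simp
    have nle: "real n \<le> 1 / (4 * e)" using fl rn by linarith
    have nlt: "1 / (4 * e) < real n + 1" using fl rn by linarith
    have e_le: "e \<le> 1 / (4 * real n)" using nle e0 npos by (simp add: field_simps)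
    have e_ge: "1 / (8 * real n) < e"
    proof -
      have "1 < 4 * e * (real n + 1)" using nlt e0 by (simp add: field_simps)
      moreover have "real n + 1 \<le> 2 * real n" using nge by simp
      moreover have "4 * e * (real n + 1) \<le> 4 * e * (2 * real n)"
        using e0 \<open>real n + 1 \<le> 2 * real n\<close> by (intro mult_left_mono) auto
      ultimately have "1 < 8 * e * real n" by linarith
      thus ?thesis using npos by (simp add: field_simps)
    qed
    from n0[OF nn0] have h1: "A n / (2*\<gamma>) \<le> u n" and h2: "2/5 < real n * (1 - Fs (u n))"
      and h3: "real n * (1 - Fs (A n * x1 + u n)) < 1/32" by auto
    have "e < 1 - Fs (u n)"
    proof -
      have "e * real n \<le> 1/4" using e_le npos by (simp add: field_simps)
      hence "e * real n < (1 - Fs (u n)) * real n" using h2 by (simp add: mult.commute)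
      thus ?thesis using npos by (simp add: mult_less_cancel_right)
    qed
    hence "u n < t"
      using mono unfolding e_def mono_def by (metis diff_left_mono not_le)
    have un0: "0 \<le> u n" using h1 A[of n] g by (smt (verit) divide_nonneg_nonneg)
    have "A n \<le> 2 * \<gamma> * u n" using h1 g by (simp add: field_simps)
    hence "A n * x1 \<le> 2 * \<gamma> * u n * x1" using x10 by (intro mult_right_mono) auto
    hence "A n * x1 + u n \<le> lam * u n" unfolding lamx by (simp add: algebra_simps)
    also have "\<dots> \<le> lam * t" using \<open>u n < t\<close> lam1 by simp
    finally have "Fs (A n * x1 + u n) \<le> Fs (lam * t)" using mono by (simp add: mono_def)
    hence "1 - Fs (lam * t) \<le> 1 - Fs (A n * x1 + u n)" by simp
    also have "\<dots> < 1 / (32 * real n)" using h3 npos by (simp add: field_simps)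
    also have "\<dots> < e / 4" using e_ge npos by (simp add: field_simps)
    finally show ?thesis by (simp add: e_def)
  qed
  thus ?thesis using lam1 by blast
qed



lemma minimax_ge:
  fixes f :: "nat \<Rightarrow> real"
  assumes fpos: "\<And>j. 1 \<le> j \<Longrightarrow> 0 < f j \<and> f j \<le> 1"
    and S0: "1 \<le> (\<Sum>i<J0. f (Suc i))"
    and J: "J0 < J"
    and q: "0 < q" "real N * q \<le> 1"
    and fq: "\<And>j. J \<le> j \<Longrightarrow> j < J + 2*N \<Longrightarrow> q \<le> f j"
  shows "ereal (real N * (1 - (1-q)^n)) \<le> minimax_redundancy f n"
  unfolding minimax_redundancy_def
proof (rule INF_greatest)
  fix Q :: "nat list \<Rightarrow> real" assume "Q \<in> {Q. (\<forall>x\<in>words n. 0 \<le> Q x) \<and> (Q has_sum 1) (words n)}"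
  hence Q0: "\<forall>x\<in>words n. 0 \<le> Q x" and Q1: "(Q has_sum 1) (words n)" by auto
  have "\<exists>p\<in>envelope_class f. ereal (real N * (1 - (1-q)^n)) \<le> kl_div (words n) (iid_prob p) Q"
    by (rule construction[OF fpos S0 J q(1) q(2) fq Q0 Q1])
  then obtain p where p: "p \<in> envelope_class f" "ereal (real N * (1 - (1-q)^n)) \<le> kl_div (words n) (iid_prob p) Q"
    by blast
  show "ereal (real N * (1 - (1-q)^n)) \<le> (SUP p\<in>envelope_class f. kl_div (words n) (iid_prob p) Q)"
    by (rule SUP_upper2[where f="\<lambda>p. kl_div (words n) (iid_prob p) Q", OF p(1) p(2)])
qed

lemma mono_from:
  fixes f :: "nat \<Rightarrow> real"
  assumes "\<And>j. j \<ge> Jm \<Longrightarrow> f (Suc j) \<le> f j" "Jm \<le> j" "j \<le> k"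
  shows "f k \<le> f j"
  using assms(3)
proof (induction k rule: dec_induct)
  case base then show ?case by simp
next
  case (step k)
  then show ?case using assms(1)[of k] assms(2) by simp
qed

lemma mseq_props:
  fixes Fs :: "real \<Rightarrow> real"
  assumes F0: "Fs 0 = 0" and mono: "mono Fs" and le1: "\<And>x. Fs x \<le> 1" and ge0: "\<And>x. 0 \<le> Fs x"
    and cont: "continuous_on {0..} Fs" and n: "1 \<le> n"
  shows "1 - Fs (m_seq Fs n) = m_seq Fs n / real n \<and> 0 \<le> m_seq Fs n \<and> m_seq Fs n \<le> real n"
proof -
  define h where "h x = 1 - Fs x - x / real n" for x
  have hc: "continuous_on {0..real n} h"
    unfolding h_def using n by (intro continuous_intros continuous_on_subset[OF cont]) auto
  have hn: "h (real n) \<le> 0" and h0: "0 \<le> h 0" using le1[of "real n"] ge0[of "real n"] n F0 by (auto simp: h_def)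
  obtain x where x: "0 \<le> x" "x \<le> real n" "h x = 0"
    using IVT2'[OF hn h0 _ hc] by auto
  have eq: "1 - Fs x = x / real n" using x(3) by (simp add: h_def)
  have uniq: "y = x" if "1 - Fs y = y / real n" for y
  proof (rule ccontr)
    assume "y \<noteq> x"
    hence "y < x \<or> x < y" by auto
    thus False
    proof
      assume "y < x"
      hence "Fs y \<le> Fs x" using mono by (simp add: mono_def)
      hence "x / real n \<le> y / real n" using eq that by simp
      hence "x \<le> y" using n by (simp add: divide_le_cancel)
      thus False using \<open>y < x\<close> by simp
    next
      assume "x < y"
      hence "Fs x \<le> Fs y" using mono by (simp add: mono_def)
      hence "y / real n \<le> x / real n" using eq that by simp
      hence "y \<le> x" using n by (simp add: divide_le_cancel)
      thus False using \<open>x < y\<close> by simp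
    qed
  qed
  have "m_seq Fs n = x" unfolding m_seq_def
    by (rule the_equality[where P="\<lambda>x. 1 - Fs x = x / real n", OF eq uniq])
  thus ?thesis using eq x by simp
qed



lemma per_n:
  fixes f :: "nat \<Rightarrow> real" and Fs :: "real \<Rightarrow> real" and m lam :: real
  assumes fpos: "\<And>j. 1 \<le> j \<Longrightarrow> 0 < f j \<and> f j \<le> 1"
    and summ: "summable (\<lambda>i. f (Suc i))"
    and monof: "\<And>j k. Jm \<le> j \<Longrightarrow> j \<le> k \<Longrightarrow> f k \<le> f j"
    and S0: "1 \<le> (\<Sum>i<J0. f (Suc i))"
    and Jdef: "J = max J0 Jm + 1"
    and monoF: "mono Fs" and Fge0: "\<And>x. 0 \<le> Fs x" and Fle1: "\<And>x. Fs x \<le> 1"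
    and cdf: "\<And>k. Fs (real k) = (if (\<Sum>i. f (Suc (i + k))) < 1 then 1 - (\<Sum>i. f (Suc (i + k))) else 0)"
    and lam1: "1 \<le> lam" and ratio: "1 - Fs (lam * m) \<le> (1 - Fs m) / 4"
    and n1: "1 \<le> n" and meq: "1 - Fs m = m / real n" and m0: "0 \<le> m" and mn: "m \<le> real n"
    and mB: "2 * real J + 4 \<le> m"
  shows "ereal ((1 - exp (- (1 / (4 * lam)))) / 4 * m) \<le> minimax_redundancy f n"
proof -
  define tl where "tl k = (\<Sum>i. f (Suc (i + k)))" for k
  define a where "a = 1 / (4 * lam)"
  define K where "K = nat \<lfloor>m\<rfloor>"
  define L where "L = nat \<lceil>lam * m\<rceil>"
  have npos: "0 < real n" using n1 by simp
  have a0: "0 < a" and a4: "a \<le> 1/4" using lam1 by (auto simp: a_def field_simps)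
  have K1: "real K \<le> m" "m < real K + 1" using m0 by (auto simp: K_def)
  have L1: "lam * m \<le> real L" "real L < lam * m + 1" using m0 lam1 by (auto simp: L_def) linarith+
  have m2: "2 \<le> m" using mB by simp
  have lm: "m \<le> lam * m" using lam1 m0 by (simp add: mult_le_cancel_right1)
  have KL: "K \<le> L" using K1 L1 lm by linarith
  have JK: "J \<le> K" using K1 mB by linarith
  have tl_sum: "summable (\<lambda>i. f (Suc (i + k)))" for k
    using summable_ignore_initial_segment[OF summ, of k] by simp
  have FbL: "1 - Fs (real L) \<le> m / (4 * real n)"
  proof -
    have "Fs (lam * m) \<le> Fs (real L)" using monoF L1 by (simp add: mono_def)
    hence "1 - Fs (real L) \<le> (1 - Fs m) / 4" using ratio by linarith
    thus ?thesis using meq by simp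
  qed
  have "m / (4 * real n) \<le> 1/4" using mn npos by (simp add: field_simps)
  hence tlL: "1 - Fs (real L) = tl L"
    using FbL cdf[of L] by (auto simp: tl_def split: if_splits)
  have tlK: "m / real n \<le> tl K"
  proof -
    have "Fs (real K) \<le> Fs m" using monoF K1 by (simp add: mono_def)
    hence "m / real n \<le> 1 - Fs (real K)" using meq by simp
    also have "\<dots> \<le> tl K" using cdf[of K] Fle1 by (auto simp: tl_def split: if_splits)
    finally show ?thesis .
  qed
  have split: "tl K = (\<Sum>i<L-K. f (Suc (i + K))) + tl L"
  proof -
    have "tl K = (\<Sum>i. f (Suc ((i + (L - K)) + K))) + (\<Sum>i<L-K. f (Suc (i + K)))"
      unfolding tl_def using suminf_split_initial_segment[OF tl_sum[of K], of "L - K"] by simp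
    moreover have "(\<lambda>i. f (Suc ((i + (L - K)) + K))) = (\<lambda>i. f (Suc (i + L)))"
      using KL by (intro ext) (simp add: algebra_simps)
    ultimately show ?thesis by (simp add: tl_def)
  qed
  have JmK: "Jm \<le> Suc K" using JK Jdef by simp
  have sbound: "(\<Sum>i<L-K. f (Suc (i + K))) \<le> real (L - K) * f (Suc K)"
  proof -
    have "(\<Sum>i<L-K. f (Suc (i + K))) \<le> real (card {..<L-K}) * f (Suc K)"
      by (rule sum_bounded_above) (use monof JmK in auto)
    thus ?thesis by simp
  qed
  have key: "3 * m / (4 * real n) \<le> real (L - K) * f (Suc K)"
  proof -
    have "m / real n - m / (4 * real n) \<le> tl K - tl L" using tlK FbL tlL by linarith
    also have "\<dots> \<le> real (L - K) * f (Suc K)" using split sbound by linarith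
    finally show ?thesis by (simp add: field_simps)
  qed
  have LK: "real (L - K) \<le> 2 * lam * m"
  proof -
    have "real (L - K) = real L - real K" using KL by simp
    also have "\<dots> \<le> lam * m + 2" using K1 L1 by linarith
    also have "\<dots> \<le> 2 * lam * m" using lm m2 by linarith
    finally show ?thesis .
  qed
  have fK0: "0 \<le> f (Suc K)" using fpos[of "Suc K"] by simp
  have qfK: "a / real n \<le> f (Suc K)"
  proof (rule ccontr)
    assume "\<not> a / real n \<le> f (Suc K)"
    hence lt: "f (Suc K) < a / real n" by simp
    have "real (L - K) * f (Suc K) \<le> 2 * lam * m * f (Suc K)"
      using LK fK0 by (rule mult_right_mono)
    also have "\<dots> \<le> 2 * lam * m * (a / real n)"
      using lt lam1 m0 by (intro mult_left_mono) auto
    also have "\<dots> = m / (2 * real n)" using lam1 by (simp add: a_def field_simps)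
    finally have "3 * m / (4 * real n) \<le> m / (2 * real n)" using key by linarith
    thus False using m2 npos by (simp add: field_simps)
  qed
  define q where "q = a / real n"
  define N where "N = (K + 2 - J) div 2"
  have q0: "0 < q" using a0 npos by (simp add: q_def)
  have JN: "J + 2 * N \<le> K + 2" using JK by (simp add: N_def)
  have fq: "q \<le> f j" if "J \<le> j" "j < J + 2 * N" for j
  proof -
    have "j \<le> Suc K" using that JN by simp
    moreover have "Jm \<le> j" using that Jdef by simp
    ultimately have "f (Suc K) \<le> f j" using monof by blast
    thus ?thesis using qfK by (simp add: q_def)
  qed
  have J0J: "J0 < J" using Jdef by simp
  have NK: "N \<le> K" using JK Jdef by (simp add: N_def)
  have Nq: "real N * q \<le> 1"
  proof -
    have "real N \<le> real n" using NK K1 mn by linarith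
    hence "real N * q \<le> real n * q" using q0 by (intro mult_right_mono) auto
    also have "\<dots> = a" using npos by (simp add: q_def)
    finally show ?thesis using a4 by linarith
  qed
  have mm: "ereal (real N * (1 - (1-q)^n)) \<le> minimax_redundancy f n"
    by (rule minimax_ge[OF fpos S0 J0J q0 Nq fq])
  have "(1 - q) ^ n \<le> exp (- (real n * q))"
    using q0 npos a4 by (intro pow_le_exp) (auto simp: q_def field_simps)
  hence pe: "(1 - q) ^ n \<le> exp (- a)" using npos by (simp add: q_def)
  have ea: "0 \<le> 1 - exp (- a)" using a0 by simp
  have N4: "m / 4 \<le> real N"
  proof -
    have "K + 1 - J \<le> 2 * N" using JK by (simp add: N_def)
    hence "real K + 1 - real J \<le> 2 * real N" using JK by linarith
    thus ?thesis using K1 mB by linarith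
  qed
  have "(1 - exp (- (1 / (4 * lam)))) / 4 * m = m / 4 * (1 - exp (- a))" by (simp add: a_def)
  also have "\<dots> \<le> real N * (1 - exp (- a))" using N4 ea by (rule mult_right_mono)
  also have "\<dots> \<le> real N * (1 - (1-q)^n)" using pe by (intro mult_left_mono) auto
  finally have "ereal ((1 - exp (- (1 / (4 * lam)))) / 4 * m) \<le> ereal (real N * (1 - (1-q)^n))"
    by simp
  thus ?thesis using mm by (rule order_trans)
qed



theorem theorem5:
  fixes f :: "nat \<Rightarrow> real" and Fs :: "real \<Rightarrow> real" and \<gamma> :: real
  assumes "is_envelope f"
    and "eventually (\<lambda>j. f (Suc j) \<le> f j) sequentially"
    and "smoothed_envelope_cdf f Fs"
    and "0 < \<gamma>"
    and "in_MDA Fs \<gamma>"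
  shows "\<exists>\<kappa>>0. eventually (\<lambda>n. ereal (\<kappa> * m_seq Fs n) \<le> minimax_redundancy f n) sequentially"
proof -
  have fpos: "\<And>j. 1 \<le> j \<Longrightarrow> 0 < f j \<and> f j \<le> 1" and summ: "summable (\<lambda>i. f (Suc i))"
    and gt1: "1 < (\<Sum>i. f (Suc i))"
    using assms(1) by (auto simp: is_envelope_def)
  have F0: "\<And>x. x < 0 \<Longrightarrow> Fs x = 0" and monoF: "mono Fs" and lim: "(Fs \<longlongrightarrow> 1) at_top"
    and cdf0: "\<And>k. Fs (real k) = envelope_cdf f k"
    using assms(3) by (auto simp: smoothed_envelope_cdf_def)
  obtain F' where F': "\<And>x. x \<ge> 0 \<Longrightarrow> (Fs has_real_derivative F' x) (at x within {0..})"
    using assms(3) unfolding smoothed_envelope_cdf_def by blast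
  have cont: "continuous_on {0..} Fs"
    by (rule DERIV_continuous_on[of _ _ F']) (use F' in auto)
  have Fle1: "Fs x \<le> 1" for x using mono_le_lim[OF monoF lim] .
  have Fge0: "0 \<le> Fs x" for x
  proof -
    have "Fs (min x (-1)) \<le> Fs x" using monoF by (simp add: mono_def)
    moreover have "Fs (min x (-1)) = 0" by (rule F0) simp
    ultimately show ?thesis by simp
  qed
  have cdf: "Fs (real k) = (if (\<Sum>i. f (Suc (i + k))) < 1 then 1 - (\<Sum>i. f (Suc (i + k))) else 0)" for k
    using cdf0[of k] by (simp add: envelope_cdf_def Let_def)
  have tlpos: "0 < (\<Sum>i. f (Suc (i + k)))" for k
    using summable_ignore_initial_segment[OF summ, of k] fpos
    by (intro suminf_pos) auto
  have Fs0: "Fs 0 = 0" using cdf[of 0] gt1 by simp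
  have Fpos: "Fs t < 1" for t
  proof -
    define k where "k = nat \<lceil>t\<rceil>"
    have "t \<le> real k" unfolding k_def by linarith
    hence "Fs t \<le> Fs (real k)" using monoF by (simp add: mono_def)
    moreover have "Fs (real k) < 1" using cdf[of k] tlpos[of k] by auto
    ultimately show ?thesis by simp
  qed
  obtain lam T where lam1: "1 \<le> lam" and T: "\<And>t. t \<ge> T \<Longrightarrow> 1 - Fs (lam * t) \<le> (1 - Fs t) / 4"
    using tail_ratio[OF F0 monoF lim Fpos assms(4) assms(5)] by blast
  obtain Jm where Jm: "\<And>j. j \<ge> Jm \<Longrightarrow> f (Suc j) \<le> f j"
    using assms(2) by (auto simp: eventually_sequentially)
  have monof: "f k \<le> f j" if "Jm \<le> j" "j \<le> k" for j k
    using mono_from[of Jm f j k] Jm that by blast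
  have "(\<lambda>n. \<Sum>i<n. f (Suc i)) \<longlonglongrightarrow> (\<Sum>i. f (Suc i))"
    using summ by (simp add: summable_LIMSEQ)
  from order_tendstoD(1)[OF this gt1] obtain J0 where "1 < (\<Sum>i<J0. f (Suc i))"
    by (auto simp: eventually_sequentially)
  hence S0: "1 \<le> (\<Sum>i<J0. f (Suc i))" by simp
  define J where "J = max J0 Jm + 1"
  define B where "B = max T (2 * real J + 4)"
  define \<kappa> where "\<kappa> = (1 - exp (- (1 / (4 * lam)))) / 4"
  have k0: "0 < \<kappa>" using lam1 by (simp add: \<kappa>_def)
  define c0 where "c0 = 1 - Fs B"
  have c0: "0 < c0" using Fpos[of B] by (simp add: c0_def)
  have ev: "eventually (\<lambda>n. 1 \<le> n \<and> B \<le> m_seq Fs n) sequentially"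
  proof -
    have "eventually (\<lambda>n. n \<ge> max 1 (nat \<lceil>B / c0\<rceil> + 1)) sequentially"
      by (rule eventually_ge_at_top)
    thus ?thesis
    proof eventually_elim
      case (elim n)
      hence n1: "1 \<le> n" by simp
      have nB: "B / c0 < real n" using elim by linarith
      have mp: "1 - Fs (m_seq Fs n) = m_seq Fs n / real n"
        using mseq_props[OF Fs0 monoF Fle1 Fge0 cont n1] by simp
      have "B \<le> m_seq Fs n"
      proof (rule ccontr)
        assume "\<not> B \<le> m_seq Fs n"
        hence "Fs (m_seq Fs n) \<le> Fs B" using monoF by (simp add: mono_def)
        hence "c0 \<le> m_seq Fs n / real n" using mp by (simp add: c0_def)
        hence "c0 * real n \<le> m_seq Fs n" using n1 by (simp add: field_simps)
        moreover have "B < c0 * real n" using nB c0 by (simp add: field_simps)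
        ultimately show False using \<open>\<not> B \<le> m_seq Fs n\<close> by simp
      qed
      thus ?case using n1 by simp
    qed
  qed
  have "eventually (\<lambda>n. ereal (\<kappa> * m_seq Fs n) \<le> minimax_redundancy f n) sequentially"
    using ev
  proof eventually_elim
    case (elim n)
    hence n1: "1 \<le> n" and mB: "B \<le> m_seq Fs n" by auto
    have mp: "1 - Fs (m_seq Fs n) = m_seq Fs n / real n \<and> 0 \<le> m_seq Fs n \<and> m_seq Fs n \<le> real n"
      using mseq_props[OF Fs0 monoF Fle1 Fge0 cont n1] .
    have rat: "1 - Fs (lam * m_seq Fs n) \<le> (1 - Fs (m_seq Fs n)) / 4"
      using T mB by (simp add: B_def)
    have mB2: "2 * real J + 4 \<le> m_seq Fs n" using mB by (simp add: B_def)
    show ?case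
      unfolding \<kappa>_def
      by (rule per_n[OF fpos summ monof S0 J_def monoF Fge0 Fle1 cdf lam1 rat n1 _ _ _ mB2])
         (use mp in auto)
  qed
  thus ?thesis using k0 by blast
qed


end
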